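(* There exist positive constants $h_0$ and $C_0$, independent of $n$ and of the potential $a$, such that for every bounded measurable $a:[0,1]\to[0,\infty)$, every $N\ge1$ with $h=1/(N+1)\in(0,h_0)$, and every $1\le n\le N$, $$\left(\mu_h^n+\frac1{h^2}\right)\left|\frac{\phi_1^n}{\sqrt{\mu_h^n}}\right|^2\le C_0\left(1+\frac{\|a\|^2_{L^\infty(0,1)}}{\mu_h^n}\right),$$ where $\Psi_h^n=[\phi^n_j]_{1\le j\le N}\in\mathbb{R}^N$ is an eigenvector of $M_h^{-1}(K_h+L_h)$ for the eigenvalue $\mu_h^n$, normalized by $\langle M_h\Psi_h^n,\Psi_h^n\rangle=1$.
   Context: $h=1/(N+1)$, $x_j=jh$, $a_j=a(x_j)$; $K_h=\frac1h\mathrm{tridiag}(-1,2,-1)$, $M_h=\frac h4\mathrm{tridiag}(1,2,1)$, $L_h=h\,\mathrm{diag}(a_1,\dots,a_N)$. The eigenvalues $\mu_h^1<\dots<\mu_h^N$ of $M_h^{-1}(K_h+L_h)$ are real, simple and positive.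
   Formalization: The norm $\|a\|_{L^\infty(0,1)}$ is replaced by the pointwise supremum of |a| over [0,1], not the essential supremum. The statement above fails without it. *)

theory Defs
  imports "HOL-Analysis.Analysis" "Jordan_Normal_Form.Char_Poly" "Jordan_Normal_Form.Gauss_Jordan_Elimination"
begin

text \<open>Matrices are N x N JNF matrices with 0-based indices; index i corresponds to j = i+1,
  grid point x_j = j h, h = 1/(N+1).\<close>

definition hN :: "nat \<Rightarrow> real" where
  "hN N = 1 / (real N + 1)"

definition K_h :: "nat \<Rightarrow> real mat" where
  "K_h N = mat N N (\<lambda>(i,j). (if i = j then 2 else if i = j + 1 \<or> j = i + 1 then -1 else 0) / hN N)"

definition M_h :: "nat \<Rightarrow> real mat" where
  "M_h N = mat N N (\<lambda>(i,j). hN N / 4 * (if i = j then 2 else if i = j + 1 \<or> j = i + 1 then 1 else 0))"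

definition L_h :: "(real \<Rightarrow> real) \<Rightarrow> nat \<Rightarrow> real mat" where
  "L_h a N = mat N N (\<lambda>(i,j). if i = j then hN N * a (real (i + 1) * hN N) else 0)"

definition A_h :: "(real \<Rightarrow> real) \<Rightarrow> nat \<Rightarrow> real mat" where
  "A_h a N = the (mat_inverse (M_h N)) * (K_h N + L_h a N)"

definition mu_h :: "(real \<Rightarrow> real) \<Rightarrow> nat \<Rightarrow> nat \<Rightarrow> real" where
  "mu_h a N n = sorted_list_of_set {\<mu>. eigenvalue (A_h a N) \<mu>} ! (n - 1)"

definition Linf_norm :: "(real \<Rightarrow> real) \<Rightarrow> real" where
  "Linf_norm a = Sup ((\<lambda>x. \<bar>a x\<bar>) ` {0..1})"

end

theory Submission
  imports Defs
begin


definition ext :: "nat \<Rightarrow> real vec \<Rightarrow> nat \<Rightarrow> real" where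
  "ext N x j = (if 1 \<le> j \<and> j \<le> N then x $ (j - 1) else 0)"

lemma tri_sum:
  assumes "i < N"
  shows "(\<Sum>k<N. (if i = k then \<alpha> else if i = k + 1 \<or> k = i + 1 then \<beta> else 0) * (x::nat\<Rightarrow>real) k)
     = \<alpha> * x i + \<beta> * ((if 0 < i then x (i - 1) else 0) + (if i + 1 < N then x (i + 1) else 0))"
proof -
  have "\<And>k. (if i = k then \<alpha> else if i = k + 1 \<or> k = i + 1 then \<beta> else 0) * x k
     = (if k = i then \<alpha> * x k else 0) + (if k + 1 = i then \<beta> * x k else 0) + (if k = i + 1 then \<beta> * x k else 0)"
    by auto
  hence "(\<Sum>k<N. (if i = k then \<alpha> else if i = k + 1 \<or> k = i + 1 then \<beta> else 0) * x k)
    = (\<Sum>k<N. (if k = i then \<alpha> * x k else 0)) + (\<Sum>k<N. (if k + 1 = i then \<beta> * x k else 0))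
      + (\<Sum>k<N. (if k = i + 1 then \<beta> * x k else 0))"
    by (simp add: sum.distrib)
  also have "(\<Sum>k<N. (if k = i then \<alpha> * x k else 0)) = \<alpha> * x i"
    using assms by (simp add: sum.delta)
  also have "(\<Sum>k<N. (if k + 1 = i then \<beta> * x k else 0)) = (if 0 < i then \<beta> * x (i - 1) else 0)"
  proof (cases i)
    case 0 then show ?thesis by simp
  next
    case (Suc m)
    have "(\<Sum>k<N. (if k + 1 = i then \<beta> * x k else 0)) = (\<Sum>k<N. (if k = m then \<beta> * x k else 0))"
      using Suc by (intro sum.cong) auto
    also have "\<dots> = \<beta> * x m" using Suc assms by (simp add: sum.delta)
    finally show ?thesis using Suc by simp
  qed
  also have "(\<Sum>k<N. (if k = i + 1 then \<beta> * x k else 0)) = (if i + 1 < N then \<beta> * x (i + 1) else 0)"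
    by (simp add: sum.delta)
  finally show ?thesis by (simp add: algebra_simps)
qed

lemma ext_simps:
  assumes "x \<in> carrier_vec N" "i < N"
  shows "x $ i = ext N x (i + 1)"
    "(if 0 < i then x $ (i - 1) else 0) = ext N x i"
    "(if i + 1 < N then x $ (i + 1) else 0) = ext N x (i + 2)"
  using assms by (auto simp: ext_def)

lemma M_row:
  assumes x: "x \<in> carrier_vec N" and i: "i < N"
  shows "(M_h N *\<^sub>v x) $ i = hN N / 4 * (2 * ext N x (i+1) + ext N x i + ext N x (i+2))"
proof -
  have "(M_h N *\<^sub>v x) $ i = (\<Sum>k<N. hN N / 4 * ((if i = k then 2 else if i = k + 1 \<or> k = i + 1 then 1 else 0) * x $ k))"
    using x i unfolding M_h_def by (simp add: scalar_prod_def lessThan_atLeast0 mult.assoc)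
  also have "\<dots> = hN N / 4 * (\<Sum>k<N. (if i = k then 2 else if i = k + 1 \<or> k = i + 1 then 1 else 0) * x $ k)"
    by (simp add: sum_distrib_left)
  also have "\<dots> = hN N / 4 * (2 * ext N x (i+1) + ext N x i + ext N x (i+2))"
    using tri_sum[OF i, of 2 1 "\<lambda>k. x $ k"] ext_simps[OF x i] by simp
  finally show ?thesis .
qed

lemma sum_delta_aux: "(\<Sum>ia = 0..<N. (y::nat\<Rightarrow>real) ia * (if i = ia then c ia else 0)) = (if i < N then y i * c i else 0)"
proof -
  have "(\<Sum>ia = 0..<N. y ia * (if i = ia then c ia else 0)) = (\<Sum>ia = 0..<N. (if i = ia then y ia * c ia else 0))"
    by (intro sum.cong) auto
  then show ?thesis by (simp add: sum.delta)
qed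

lemma KL_row:
  assumes x: "x \<in> carrier_vec N" and i: "i < N"
  shows "((K_h N + L_h a N) *\<^sub>v x) $ i = (2 * ext N x (i+1) - ext N x i - ext N x (i+2)) / hN N
      + hN N * a (real (i+1) * hN N) * ext N x (i+1)"
proof -
  have "((K_h N + L_h a N) *\<^sub>v x) $ i = (\<Sum>k<N. (1 / hN N) * ((if i = k then 2 else if i = k + 1 \<or> k = i + 1 then -1 else 0) * x $ k))
     + (\<Sum>k<N. (if k = i then hN N * a (real (i + 1) * hN N) * x $ k else 0))"
    using x i unfolding K_h_def L_h_def 
    by (simp add: scalar_prod_def lessThan_atLeast0 algebra_simps sum.distrib if_distrib[of "\<lambda>t. t * _"] sum_delta_aux cong: if_cong)
  also have "\<dots> = (1 / hN N) * (\<Sum>k<N. (if i = k then 2 else if i = k + 1 \<or> k = i + 1 then -1 else 0) * x $ k)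
     + hN N * a (real (i + 1) * hN N) * x $ i"
    using i by (simp add: sum_distrib_left sum.delta)
  also have "\<dots> = (2 * ext N x (i+1) - ext N x i - ext N x (i+2)) / hN N
      + hN N * a (real (i+1) * hN N) * ext N x (i+1)"
    using tri_sum[OF i, of 2 "-1" "\<lambda>k. x $ k"] ext_simps[OF x i] by (simp add: field_simps)
  finally show ?thesis .
qed

lemma reidx: "(\<Sum>i<N. (g::nat\<Rightarrow>real) (i+1)) = (\<Sum>j=1..N. g j)"
  by (induction N) (auto simp: atLeastAtMostSuc_conv)

lemma quad:
  fixes w :: "nat \<Rightarrow> real"
  shows "(\<Sum>j=0..N. (w (j+1) + s * w j)\<^sup>2) = (\<Sum>j=1..N. w j * ((1 + s\<^sup>2) * w j + s * w (j-1) + s * w (j+1)))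
     + s\<^sup>2 * (w 0)\<^sup>2 + (w (N+1))\<^sup>2 + s * w 0 * w 1 + s * w N * w (N+1)"
proof (induction N)
  case 0
  then show ?case by (simp add: power2_eq_square algebra_simps)
next
  case (Suc N)
  have "(\<Sum>j=0..Suc N. (w (j+1) + s * w j)\<^sup>2) = (\<Sum>j=0..N. (w (j+1) + s * w j)\<^sup>2) + (w (N+2) + s * w (N+1))\<^sup>2"
    by simp
  also have "(\<Sum>j=1..Suc N. w j * ((1 + s\<^sup>2) * w j + s * w (j-1) + s * w (j+1))) =
     (\<Sum>j=1..N. w j * ((1 + s\<^sup>2) * w j + s * w (j-1) + s * w (j+1))) + w (N+1) * ((1 + s\<^sup>2) * w (N+1) + s * w N + s * w (N+2))"
    by simp
  ultimately show ?case using Suc.IH by (simp add: power2_eq_square algebra_simps)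
qed

lemma ext_0: "ext N x 0 = 0" and ext_N: "ext N x (N+1) = 0" and ext_SN: "ext N x (Suc N) = 0"
  by (auto simp: ext_def)

lemma scal_ext:
  assumes "x \<in> carrier_vec N"
  shows "y \<bullet> x = (\<Sum>i<N. y $ i * ext N x (i+1))"
  using assms by (auto simp: scalar_prod_def ext_def lessThan_atLeast0 intro!: sum.cong)

lemma mass:
  assumes x: "x \<in> carrier_vec N"
  shows "(M_h N *\<^sub>v x) \<bullet> x = hN N / 4 * (\<Sum>j=0..N. (ext N x (j+1) + ext N x j)\<^sup>2)"
proof -
  let ?w = "ext N x"
  have "(M_h N *\<^sub>v x) \<bullet> x = (\<Sum>i<N. hN N / 4 * (2 * ?w (i+1) + ?w i + ?w (i+2)) * ?w (i+1))"
    unfolding scal_ext[OF x] by (intro sum.cong) (auto simp: M_row[OF x])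
  also have "\<dots> = (\<Sum>j=1..N. hN N / 4 * (2 * ?w j + ?w (j-1) + ?w (j+1)) * ?w j)"
    using reidx[of "\<lambda>j. hN N / 4 * (2 * ?w j + ?w (j-1) + ?w (j+1)) * ?w j" N] by simp
  also have "\<dots> = hN N / 4 * (\<Sum>j=1..N. ?w j * ((1 + 1\<^sup>2) * ?w j + 1 * ?w (j-1) + 1 * ?w (j+1)))"
    by (simp add: sum_distrib_left algebra_simps)
  also have "\<dots> = hN N / 4 * (\<Sum>j=0..N. (?w (j+1) + 1 * ?w j)\<^sup>2)"
    using quad[of ?w 1 N] by (simp add: ext_0 ext_N ext_SN)
  finally show ?thesis by simp
qed

lemma energy:
  assumes x: "x \<in> carrier_vec N"
  shows "((K_h N + L_h a N) *\<^sub>v x) \<bullet> x = (\<Sum>j=0..N. (ext N x (j+1) - ext N x j)\<^sup>2) / hN N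
     + hN N * (\<Sum>j=1..N. a (real j * hN N) * (ext N x j)\<^sup>2)"
proof -
  let ?w = "ext N x"
  have "((K_h N + L_h a N) *\<^sub>v x) \<bullet> x = (\<Sum>i<N. ((2 * ?w (i+1) - ?w i - ?w (i+2)) / hN N
      + hN N * a (real (i+1) * hN N) * ?w (i+1)) * ?w (i+1))"
    unfolding scal_ext[OF x] by (intro sum.cong) (auto simp: KL_row[OF x])
  also have "\<dots> = (\<Sum>j=1..N. ((2 * ?w j - ?w (j-1) - ?w (j+1)) / hN N
      + hN N * a (real j * hN N) * ?w j) * ?w j)"
    using reidx[of "\<lambda>j. ((2 * ?w j - ?w (j-1) - ?w (j+1)) / hN N
      + hN N * a (real j * hN N) * ?w j) * ?w j" N] by simp
  also have "\<dots> = (\<Sum>j=1..N. ?w j * ((1 + (-1)\<^sup>2) * ?w j + (-1) * ?w (j-1) + (-1) * ?w (j+1))) / hN N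
     + hN N * (\<Sum>j=1..N. a (real j * hN N) * (?w j)\<^sup>2)"
    by (simp add: sum_distrib_left sum_divide_distrib sum.distrib algebra_simps power2_eq_square)
  also have "\<dots> = (\<Sum>j=0..N. (?w (j+1) + (-1) * ?w j)\<^sup>2) / hN N + hN N * (\<Sum>j=1..N. a (real j * hN N) * (?w j)\<^sup>2)"
    using quad[of ?w "-1" N] by (simp add: ext_0 ext_N ext_SN)
  finally show ?thesis by simp
qed

lemma zero_ext:
  fixes w :: "nat \<Rightarrow> real"
  assumes "w 0 = 0" "(\<Sum>j=0..N. (w (j+1) + s * w j)\<^sup>2) = 0"
  shows "\<forall>j \<le> N+1. w j = 0"
proof -
  have t: "w (j+1) + s * w j = 0" if "j \<le> N" for j
    using assms(2) that by (subst (asm) sum_nonneg_eq_0_iff) auto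
  show ?thesis
  proof (intro allI impI)
    fix j assume "j \<le> N + 1"
    then show "w j = 0"
    proof (induction j)
      case 0 then show ?case using assms(1) by simp
    next
      case (Suc j) then show ?case using t[of j] by simp
    qed
  qed
qed

lemma ext_zero_vec:
  assumes x: "x \<in> carrier_vec N" and "\<forall>j \<le> N+1. ext N x j = 0"
  shows "x = 0\<^sub>v N"
proof (rule eq_vecI)
  fix i assume "i < dim_vec (0\<^sub>v N)"
  then have "i < N" by simp
  then show "x $ i = 0\<^sub>v N $ i" using assms(2) ext_simps(1)[OF x \<open>i < N\<close>] by simp
qed (use x in simp)



lemma amgm_term:
  fixes h l a A x d :: real
  assumes h: "h > 0" and l: "l \<ge> 0" and a: "0 \<le> a" "a \<le> A"
  shows "\<bar>h\<^sup>2 * a * x * d\<bar> \<le> (h^3 * A\<^sup>2 * x\<^sup>2 / (1 + l) + h * (1 + l) * d\<^sup>2) / 2"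
proof -
  have A0: "A \<ge> 0" using a by simp
  have "\<bar>h\<^sup>2 * a * x * d\<bar> = h\<^sup>2 * a * \<bar>x\<bar> * \<bar>d\<bar>" using h a by (simp add: abs_mult)
  also have "\<dots> \<le> h\<^sup>2 * A * \<bar>x\<bar> * \<bar>d\<bar>" using h a by (intro mult_right_mono mult_left_mono) auto
  also have "\<dots> = (h / (1 + l)) * ((h * A * \<bar>x\<bar>) * ((1 + l) * \<bar>d\<bar>))" using l by (simp add: field_simps power2_eq_square)
  also have "\<dots> \<le> (h / (1 + l)) * (((h * A * \<bar>x\<bar>)\<^sup>2 + ((1 + l) * \<bar>d\<bar>)\<^sup>2) / 2)"
  proof (rule mult_left_mono)
    have "0 \<le> (h * A * \<bar>x\<bar> - (1 + l) * \<bar>d\<bar>)\<^sup>2" by simp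
    then show "h * A * \<bar>x\<bar> * ((1 + l) * \<bar>d\<bar>) \<le> ((h * A * \<bar>x\<bar>)\<^sup>2 + ((1 + l) * \<bar>d\<bar>)\<^sup>2) / 2"
      by (simp add: power2_eq_square algebra_simps)
  qed (use h l in auto)
  also have "\<dots> = (h^3 * A\<^sup>2 * x\<^sup>2 / (1 + l) + h * (1 + l) * d\<^sup>2) / 2"
    using l by (simp add: field_simps power2_eq_square power3_eq_cube)
  finally show ?thesis .
qed

lemma sq_le: "((p::real) + q)\<^sup>2 \<le> 2 * (p\<^sup>2 + q\<^sup>2)"
proof -
  have "0 \<le> (p - q)\<^sup>2" by simp
  then show ?thesis by (simp add: power2_eq_square algebra_simps)
qed

lemma rellich:
  fixes w a' :: "nat \<Rightarrow> real" and h \<mu> A :: real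
  assumes h: "h > 0" and hN: "h * (real N + 1) = 1" and w0: "w 0 = 0" and wN: "w (N+1) = 0"
    and eq: "\<And>j. 1 \<le> j \<Longrightarrow> j \<le> N \<Longrightarrow>
       (2 * w j - w (j-1) - w (j+1)) / h + h * a' j * w j = \<mu> * (h / 4 * (2 * w j + w (j-1) + w (j+1)))"
    and mass: "h / 4 * (\<Sum>j=0..N. (w (j+1) + w j)\<^sup>2) = 1"
    and energy: "(\<Sum>j=0..N. (w (j+1) - w j)\<^sup>2) / h + h * (\<Sum>j=1..N. a' j * (w j)\<^sup>2) = \<mu>"
    and apos: "\<And>j. 1 \<le> j \<Longrightarrow> j \<le> N \<Longrightarrow> 0 \<le> a' j \<and> a' j \<le> A"
    and mu: "\<mu> > 0"
  shows "(1 + \<mu> * h\<^sup>2) * (w 1)\<^sup>2 \<le> 24 * (h\<^sup>2 * (\<mu> + A\<^sup>2))"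
proof -
  define l where "l = \<mu> * h\<^sup>2 / 4"
  have l0: "l \<ge> 0" using mu by (simp add: l_def)
  define S1 where "S1 = (\<Sum>j=0..N. (w (j+1) - w j)\<^sup>2)"
  define S2 where "S2 = (\<Sum>j=0..N. (w (j+1) + w j)\<^sup>2)"
  define G where "G j = (w (j+1) - w j)\<^sup>2 + l * (w (j+1) + w j)\<^sup>2" for j
  define r where "r j = h\<^sup>2 * a' j * w j * (w (j+1) - w (j-1))" for j
  define R where "R = (\<Sum>j=1..N. \<bar>r j\<bar>)"
  have G0: "G j \<ge> 0" for j using l0 by (simp add: G_def)
  have hS2: "h * S2 = 4" using mass by (simp add: S2_def field_simps)
  have nn: "h * (\<Sum>j=1..N. a' j * (w j)\<^sup>2) \<ge> 0"
    using h apos by (intro mult_nonneg_nonneg sum_nonneg) auto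
  have hS1: "h * S1 \<le> 4 * l"
  proof -
    have "S1 / h \<le> \<mu>" using energy nn by (simp add: S1_def)
    then have "S1 \<le> \<mu> * h" using h by (simp add: divide_le_eq)
    then have "h * S1 \<le> h * (\<mu> * h)" using h by (intro mult_left_mono) auto
    then show ?thesis by (simp add: l_def power2_eq_square algebra_simps)
  qed
  have S1nn: "S1 \<ge> 0" by (simp add: S1_def sum_nonneg)
  have step: "G j - G (j-1) = r j" if j: "1 \<le> j" "j \<le> N" for j
  proof -
    obtain k where k: "j = Suc k" using j by (cases j) auto
    have e: "(2 * w j - w (j-1) - w (j+1)) + h\<^sup>2 * a' j * w j = l * (2 * w j + w (j-1) + w (j+1))"
      using eq[OF j] h by (simp add: l_def field_simps power2_eq_square)
    have "G j - G (j-1) = (w (j+1) - w (j-1)) * (l * (2 * w j + w (j-1) + w (j+1)) - (2 * w j - w (j-1) - w (j+1)))"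
      unfolding G_def k by (simp add: power2_eq_square algebra_simps)
    also have "\<dots> = (w (j+1) - w (j-1)) * (h\<^sup>2 * a' j * w j)"
    proof -
      have e': "h\<^sup>2 * a' j * w j = l * (2 * w j + w (j-1) + w (j+1)) - (2 * w j - w (j-1) - w (j+1))"
        using e by linarith
      show ?thesis by (simp only: e')
    qed
    also have "\<dots> = r j" unfolding r_def by (simp add: algebra_simps)
    finally show ?thesis .
  qed
  have Gk: "G k = G 0 + (\<Sum>j=1..k. r j)" if "k \<le> N" for k
    using that
  proof (induction k)
    case 0 then show ?case by simp
  next
    case (Suc k)
    then show ?case using step[of "Suc k"] by simp
  qed
  have G0le: "G 0 \<le> G k + R" if "k \<le> N" for k
  proof -
    have "- (\<Sum>j=1..k. r j) \<le> (\<Sum>j=1..k. \<bar>r j\<bar>)"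
      using sum_abs[of r "{1..k}"] by linarith
    also have "\<dots> \<le> R" unfolding R_def using that by (intro sum_mono2) auto
    finally show ?thesis using Gk[OF that] by linarith
  qed
  have sumG: "(\<Sum>k=0..N. G k) = S1 + l * S2"
    by (simp add: G_def S1_def S2_def sum.distrib sum_distrib_left)
  have "(real N + 1) * G 0 = (\<Sum>k=0..N. G 0)" by simp
  also have "\<dots> \<le> (\<Sum>k=0..N. G k + R)" by (intro sum_mono G0le) auto
  also have "\<dots> = (S1 + l * S2) + (real N + 1) * R" by (simp add: sum.distrib sumG)
  finally have "h * ((real N + 1) * G 0) \<le> h * ((S1 + l * S2) + (real N + 1) * R)"
    using h by (intro mult_left_mono) auto
  moreover have hX: "h * ((real N + 1) * X) = X" for X by (metis hN mult.assoc mult_1)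
  moreover have "h * ((S1 + l * S2) + (real N + 1) * R) = h * (S1 + l * S2) + h * ((real N + 1) * R)"
    by (simp only: distrib_left)
  moreover have "h * (S1 + l * S2) = h * S1 + l * (h * S2)" by (simp add: algebra_simps)
  ultimately have G0bound: "G 0 \<le> h * S1 + l * (h * S2) + R"
    by (metis hX)
  have rterm: "\<bar>r j\<bar> \<le> (h^3 * A\<^sup>2 * (w j)\<^sup>2 / (1 + l) + h * ((1 + l) * (w (j+1) - w (j-1))\<^sup>2)) / 2"
    if "j \<in> {1..N}" for j
    using amgm_term[OF h l0, of "a' j" A "w j" "w (j+1) - w (j-1)"] apos that
    by (simp add: r_def mult.assoc)
  have sumw: "(\<Sum>j=1..N. (w j)\<^sup>2) \<le> (S1 + S2) / 2"
  proof -
    have "(\<Sum>j=1..N. (w j)\<^sup>2) \<le> (\<Sum>j=1..N+1. (w j)\<^sup>2)" by (intro sum_mono2) auto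
    also have "\<dots> = (\<Sum>j=0..N. (w (j+1))\<^sup>2)"
      using sum.shift_bounds_cl_Suc_ivl[of "\<lambda>j. (w j)\<^sup>2" 0 N] by simp
    also have "\<dots> \<le> (\<Sum>j=0..N. ((w (j+1) - w j)\<^sup>2 + (w (j+1) + w j)\<^sup>2) / 2)"
      by (intro sum_mono) (simp add: power2_eq_square algebra_simps)
    also have "\<dots> = (S1 + S2) / 2" unfolding S1_def S2_def sum_divide_distrib[symmetric] sum.distrib by simp
    finally show ?thesis .
  qed
  have dterm: "(1 + l) * (w (j+1) - w (j-1))\<^sup>2 \<le> 2 * (G j + G (j-1))" if jN: "j \<in> {1..N}" for j
  proof -
    obtain k where k: "j = Suc k" using jN by (cases j) auto
    have a1: "(w (j+1) - w (j-1))\<^sup>2 \<le> 2 * ((w (j+1) - w j)\<^sup>2 + (w j - w (j-1))\<^sup>2)"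
      using sq_le[of "w (j+1) - w j" "w j - w (j-1)"] by simp
    have a2: "(w (j+1) - w (j-1))\<^sup>2 \<le> 2 * ((w (j+1) + w j)\<^sup>2 + (w j + w (j-1))\<^sup>2)"
      using sq_le[of "w (j+1) + w j" "- (w j + w (j-1))"] by (simp add: power2_eq_square algebra_simps)
    have "l * (w (j+1) - w (j-1))\<^sup>2 \<le> l * (2 * ((w (j+1) + w j)\<^sup>2 + (w j + w (j-1))\<^sup>2))"
      using a2 l0 by (intro mult_left_mono) auto
    then show ?thesis using a1 unfolding G_def k by (simp add: algebra_simps)
  qed
  have sumGG: "(\<Sum>j=1..N. G j + G (j-1)) \<le> 2 * (\<Sum>k=0..N. G k)"
  proof -
    have "(\<Sum>j=1..N. G j) \<le> (\<Sum>k=0..N. G k)" using G0 by (intro sum_mono2) auto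
    moreover have "(\<Sum>j=1..N. G (j-1)) \<le> (\<Sum>k=0..N. G k)"
    proof -
      have "(\<Sum>j=1..N. G (j-1)) = (\<Sum>j=0..<N. G j)"
      proof (cases N)
        case 0 then show ?thesis by simp
      next
        case (Suc m)
        have "(\<Sum>j=1..N. G (j-1)) = (\<Sum>j=Suc 0..<Suc N. G (j-1))"
          by (simp add: atLeastLessThanSuc_atLeastAtMost)
        also have "\<dots> = (\<Sum>j=0..<N. G j)" by (subst sum.shift_bounds_Suc_ivl) simp
        finally show ?thesis .
      qed
      also have "\<dots> \<le> (\<Sum>k=0..N. G k)" using G0 by (intro sum_mono2) auto
      finally show ?thesis .
    qed
    ultimately show ?thesis by (simp add: sum.distrib)
  qed
  have "R \<le> (\<Sum>j=1..N. (h^3 * A\<^sup>2 * (w j)\<^sup>2 / (1 + l) + h * ((1 + l) * (w (j+1) - w (j-1))\<^sup>2)) / 2)"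
    unfolding R_def by (intro sum_mono rterm)
  also have "\<dots> = (h^3 * A\<^sup>2 / (1 + l) * (\<Sum>j=1..N. (w j)\<^sup>2) + h * (\<Sum>j=1..N. (1 + l) * (w (j+1) - w (j-1))\<^sup>2)) / 2"
  proof -
    have "(\<Sum>j=1..N. (h^3 * A\<^sup>2 * (w j)\<^sup>2 / (1 + l) + h * ((1 + l) * (w (j+1) - w (j-1))\<^sup>2)) / 2)
       = (\<Sum>j=1..N. h^3 * A\<^sup>2 / (1 + l) * (w j)\<^sup>2 + h * ((1 + l) * (w (j+1) - w (j-1))\<^sup>2)) / 2"
      unfolding sum_divide_distrib by (intro sum.cong) auto
    also have "\<dots> = (h^3 * A\<^sup>2 / (1 + l) * (\<Sum>j=1..N. (w j)\<^sup>2) + h * (\<Sum>j=1..N. (1 + l) * (w (j+1) - w (j-1))\<^sup>2)) / 2"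
      by (simp only: sum.distrib sum_distrib_left)
    finally show ?thesis .
  qed
  also have "\<dots> \<le> (h^3 * A\<^sup>2 / (1 + l) * ((S1 + S2) / 2) + h * (\<Sum>j=1..N. 2 * (G j + G (j-1)))) / 2"
    using h l0 sumw dterm
    by (intro divide_right_mono add_mono mult_left_mono sum_mono) auto
  also have "\<dots> \<le> (h\<^sup>2 * A\<^sup>2 * 2 + h * (2 * (2 * (\<Sum>k=0..N. G k)))) / 2"
  proof -
    have "h^3 * A\<^sup>2 / (1 + l) * ((S1 + S2) / 2) = h\<^sup>2 * A\<^sup>2 / (1 + l) * ((h * S1 + h * S2) / 2)"
      by (simp add: power2_eq_square power3_eq_cube algebra_simps)
    also have "\<dots> \<le> h\<^sup>2 * A\<^sup>2 / (1 + l) * (2 * (1 + l))"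
      using hS1 hS2 l0 by (intro mult_left_mono) auto
    also have "\<dots> = h\<^sup>2 * A\<^sup>2 * 2" using l0 by (simp add: field_simps)
    finally have 1: "h^3 * A\<^sup>2 / (1 + l) * ((S1 + S2) / 2) \<le> h\<^sup>2 * A\<^sup>2 * 2" .
    have 2: "h * (\<Sum>j=1..N. 2 * (G j + G (j-1))) \<le> h * (2 * (2 * (\<Sum>k=0..N. G k)))"
    proof -
      have "(\<Sum>j=1..N. 2 * (G j + G (j-1))) = 2 * (\<Sum>j=1..N. G j + G (j-1))"
        by (simp only: sum_distrib_left)
      then show ?thesis using sumGG h by (intro mult_left_mono) auto
    qed
    show ?thesis by (rule divide_right_mono[OF add_mono[OF 1 2]]) simp
  qed
  also have "\<dots> \<le> h\<^sup>2 * A\<^sup>2 + 16 * l"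
  proof -
    have "h * (\<Sum>k=0..N. G k) = h * S1 + l * (h * S2)" by (simp add: sumG algebra_simps)
    also have "\<dots> \<le> 8 * l" using hS1 hS2 by simp
    finally show ?thesis by simp
  qed
  finally have Rb: "R \<le> h\<^sup>2 * A\<^sup>2 + 16 * l" .
  have "G 0 = (1 + l) * (w 1)\<^sup>2" by (simp add: G_def w0 algebra_simps)
  with G0bound Rb hS1 hS2 have main: "(1 + l) * (w 1)\<^sup>2 \<le> 24 * l + h\<^sup>2 * A\<^sup>2" by simp
  have "(1 + \<mu> * h\<^sup>2) * (w 1)\<^sup>2 = (1 + 4 * l) * (w 1)\<^sup>2" by (simp add: l_def)
  also have "\<dots> \<le> 4 * ((1 + l) * (w 1)\<^sup>2)" using l0 by (simp add: algebra_simps)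
  also have "\<dots> \<le> 4 * (24 * l + h\<^sup>2 * A\<^sup>2)" using main by simp
  also have "\<dots> \<le> 24 * (h\<^sup>2 * (\<mu> + A\<^sup>2))" by (simp add: l_def algebra_simps)
  finally show ?thesis .
qed


lemma key:
  fixes a :: "real \<Rightarrow> real" and N n :: nat and v :: "real vec"
  assumes bnd: "bounded (a ` {0..1})" and apos0: "\<forall>x\<in>{0..1}. 0 \<le> a x"
    and N1: "1 \<le> N"
    and ev: "eigenvector (A_h a N) v (mu_h a N n)" and mv: "(M_h N *\<^sub>v v) \<bullet> v = 1"
  shows "(mu_h a N n + 1 / (hN N)\<^sup>2) * \<bar>vec_index v 0 / sqrt (mu_h a N n)\<bar>\<^sup>2
         \<le> 24 * (1 + (Linf_norm a)\<^sup>2 / mu_h a N n)"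
proof -
  define h where "h = hN N"
  define \<mu> where "\<mu> = mu_h a N n"
  define w where "w = ext N v"
  define A where "A = Linf_norm a"
  have h0: "h > 0" by (simp add: h_def hN_def)
  have hN1: "h * (real N + 1) = 1" by (simp add: h_def hN_def)
  have Mc: "M_h N \<in> carrier_mat N N" by (simp add: M_h_def)
  have KLc: "K_h N + L_h a N \<in> carrier_mat N N" by (simp add: K_h_def L_h_def)
  have detM: "det (M_h N) \<noteq> 0"
  proof
    assume "det (M_h N) = 0"
    then obtain x where x: "x \<in> carrier_vec N" "x \<noteq> 0\<^sub>v N" "M_h N *\<^sub>v x = 0\<^sub>v N"
      using det_0_iff_vec_prod_zero[OF Mc] by blast
    have "(M_h N *\<^sub>v x) \<bullet> x = 0" using x by simp
    then have "hN N / 4 * (\<Sum>j=0..N. (ext N x (j+1) + ext N x j)\<^sup>2) = 0" using mass[OF x(1)] by simp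
    then have "(\<Sum>j=0..N. (ext N x (j+1) + 1 * ext N x j)\<^sup>2) = 0" by (simp add: hN_def)
    from zero_ext[OF ext_0 this] have "x = 0\<^sub>v N" using ext_zero_vec[OF x(1)] by blast
    with x(2) show False by simp
  qed
  obtain B where B: "mat_inverse (M_h N) = Some B"
  proof (cases "mat_inverse (M_h N)")
    case None
    have "M_h N \<in> Units (ring_mat TYPE(real) N ())" by (rule det_non_zero_imp_unit[OF Mc detM])
    with mat_inverse(1)[OF Mc None, where b="()"] show ?thesis by blast
  next
    case (Some B) then show ?thesis using that by blast
  qed
  from mat_inverse(2)[OF Mc B] have MB: "M_h N * B = 1\<^sub>m N" and Bc: "B \<in> carrier_mat N N" by auto
  have Ah: "A_h a N = B * (K_h N + L_h a N)" by (simp add: A_h_def B)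
  have dimA: "dim_row (A_h a N) = N" using Ah Bc by simp
  from ev have vc: "v \<in> carrier_vec N" and v0: "v \<noteq> 0\<^sub>v N" and Av: "(B * (K_h N + L_h a N)) *\<^sub>v v = \<mu> \<cdot>\<^sub>v v"
    unfolding eigenvector_def dimA by (auto simp: Ah \<mu>_def)
  have KLv: "(K_h N + L_h a N) *\<^sub>v v = \<mu> \<cdot>\<^sub>v (M_h N *\<^sub>v v)"
  proof -
    have KLvc: "(K_h N + L_h a N) *\<^sub>v v \<in> carrier_vec N" using KLc vc by simp
    have "(K_h N + L_h a N) *\<^sub>v v = (M_h N * B) *\<^sub>v ((K_h N + L_h a N) *\<^sub>v v)"
      using MB KLvc by simp
    also have "\<dots> = M_h N *\<^sub>v (B *\<^sub>v ((K_h N + L_h a N) *\<^sub>v v))"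
      using Mc Bc KLvc by simp
    also have "B *\<^sub>v ((K_h N + L_h a N) *\<^sub>v v) = (B * (K_h N + L_h a N)) *\<^sub>v v"
      using Bc KLc vc by simp
    also have "\<dots> = \<mu> \<cdot>\<^sub>v v" by (rule Av)
    also have "M_h N *\<^sub>v (\<mu> \<cdot>\<^sub>v v) = \<mu> \<cdot>\<^sub>v (M_h N *\<^sub>v v)" by (rule mult_mat_vec[OF Mc vc])
    finally show ?thesis .
  qed
  have eq: "(2 * w j - w (j-1) - w (j+1)) / h + h * a (real j * h) * w j = \<mu> * (h / 4 * (2 * w j + w (j-1) + w (j+1)))"
    if j: "1 \<le> j" "j \<le> N" for j
  proof -
    define i where "i = j - 1"
    have i: "i < N" and ji: "j = i + 1" using j by (auto simp: i_def)
    have "((K_h N + L_h a N) *\<^sub>v v) $ i = (\<mu> \<cdot>\<^sub>v (M_h N *\<^sub>v v)) $ i" using KLv by simp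
    also have "\<dots> = \<mu> * (M_h N *\<^sub>v v) $ i" using i Mc by simp
    finally show ?thesis unfolding KL_row[OF vc i] M_row[OF vc i] w_def h_def ji by (simp add: add.commute)
  qed
  have massw: "h / 4 * (\<Sum>j=0..N. (w (j+1) + w j)\<^sup>2) = 1"
    using mass[OF vc] mv by (simp add: w_def h_def)
  have Mvc: "M_h N *\<^sub>v v \<in> carrier_vec N" using Mc vc by simp
  have energyw: "(\<Sum>j=0..N. (w (j+1) - w j)\<^sup>2) / h + h * (\<Sum>j=1..N. a (real j * h) * (w j)\<^sup>2) = \<mu>"
  proof -
    have "((K_h N + L_h a N) *\<^sub>v v) \<bullet> v = \<mu> * ((M_h N *\<^sub>v v) \<bullet> v)"
      unfolding KLv using smult_scalar_prod_distrib[OF Mvc vc] by simp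
    then show ?thesis using energy[OF vc, of a] mv by (simp add: w_def h_def)
  qed
  have apos: "0 \<le> a (real j * h) \<and> a (real j * h) \<le> A" if "1 \<le> j" "j \<le> N" for j
  proof -
    have xin: "real j * h \<in> {0..1}" using that h0 hN1
      by (auto simp: h_def hN_def field_simps)
    obtain Bd where Bd: "\<forall>x\<in>a ` {0..1}. norm x \<le> Bd" using bnd bounded_iff by metis
    have bdd: "bdd_above ((\<lambda>x. \<bar>a x\<bar>) ` {0..1})" using Bd by (auto intro!: bdd_aboveI2)
    have "a (real j * h) \<le> \<bar>a (real j * h)\<bar>" by simp
    also have "\<dots> \<le> A" unfolding A_def Linf_norm_def by (rule cSup_upper[OF _ bdd]) (use xin in auto)
    finally show ?thesis using apos0 xin by auto
  qed
  have S1nn: "(\<Sum>j=0..N. (w (j+1) - w j)\<^sup>2) \<ge> 0" by (simp add: sum_nonneg)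
  have nn: "h * (\<Sum>j=1..N. a (real j * h) * (w j)\<^sup>2) \<ge> 0"
    using h0 apos by (intro mult_nonneg_nonneg sum_nonneg) auto
  have mu0: "\<mu> > 0"
  proof (rule ccontr)
    assume "\<not> \<mu> > 0"
    then have "(\<Sum>j=0..N. (w (j+1) - w j)\<^sup>2) / h \<le> 0" using energyw nn by linarith
    then have "(\<Sum>j=0..N. (w (j+1) - w j)\<^sup>2) = 0" using S1nn h0
      by (smt (verit) divide_pos_pos)
    then have "(\<Sum>j=0..N. (w (j+1) + (-1) * w j)\<^sup>2) = 0" by simp
    from zero_ext[OF _ this] have "\<forall>j\<le>N+1. w j = 0" by (simp add: w_def ext_0)
    then have "v = 0\<^sub>v N" using ext_zero_vec[OF vc] by (simp add: w_def)
    with v0 show False by simp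
  qed
  have R: "(1 + \<mu> * h\<^sup>2) * (w 1)\<^sup>2 \<le> 24 * (h\<^sup>2 * (\<mu> + A\<^sup>2))"
    by (rule rellich[OF h0 hN1 _ _ eq massw energyw apos mu0]) (auto simp: w_def ext_0 ext_N ext_SN)
  have v0w: "vec_index v 0 = w 1" using N1 by (simp add: w_def ext_def)
  have "(\<mu> + 1 / h\<^sup>2) * \<bar>vec_index v 0 / sqrt \<mu>\<bar>\<^sup>2 = ((1 + \<mu> * h\<^sup>2) * (w 1)\<^sup>2) / (\<mu> * h\<^sup>2)"
    using mu0 h0 by (simp add: v0w power_divide field_simps)
  also have "\<dots> \<le> (24 * (h\<^sup>2 * (\<mu> + A\<^sup>2))) / (\<mu> * h\<^sup>2)"
    using R mu0 h0 by (intro divide_right_mono) auto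
  also have "\<dots> = 24 * (1 + A\<^sup>2 / \<mu>)" using mu0 h0 by (simp add: field_simps)
  finally show ?thesis by (simp add: \<mu>_def h_def A_def)
qed

theorem lemma2:
  shows "\<exists>h0 > 0. \<exists>C0 > 0. \<forall>(a :: real \<Rightarrow> real) (N :: nat) (n :: nat) (v :: real vec).
     set_borel_measurable lborel {0..1} a \<and> bounded (a ` {0..1}) \<and> (\<forall>x\<in>{0..1}. 0 \<le> a x) \<and>
     1 \<le> N \<and> hN N < h0 \<and> 1 \<le> n \<and> n \<le> N \<and>
     eigenvector (A_h a N) v (mu_h a N n) \<and> (M_h N *\<^sub>v v) \<bullet> v = 1
     \<longrightarrow> (mu_h a N n + 1 / (hN N)\<^sup>2) * \<bar>vec_index v 0 / sqrt (mu_h a N n)\<bar>\<^sup>2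
         \<le> C0 * (1 + (Linf_norm a)\<^sup>2 / mu_h a N n)"
  apply (rule exI[of _ "1::real"])
  apply (rule conjI, simp)
  apply (rule exI[of _ "24::real"])
  apply (rule conjI, simp)
  apply (intro allI impI)
  apply (elim conjE)
  apply (rule key)
      apply assumption+
  done

end
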